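(* In the simplified FaRMv2 protocol described in the context, let $T$ be a transaction with read timestamp $rts$, and let $R$ be an object in $T$'s read set which $T$ reads at version $v_R \le rts$. Then in this execution the object $R$ is never updated at a version (timestamp) lying in the interval $(v_R, rts)$.
   Context: Global time means the time at a distinguished clock master. Each machine has a local clock whose rate differs from that of global time by a relative factor of at most a known drift bound $\epsilon$. The function TIME() returns an interval $[L,U]$ such that the global time at the moment of the call lies in $[L,U]$. The function GET\_TS is: $[L,U] \gets \mathrm{TIME}()$; sleep for $(U-L)(1+\epsilon)$ units of local time; return $U$. The data consists of objects, each having a lock bit and a set of versions, each version tagged with a timestamp (the write timestamp of the transaction that wrote it). ReadAtTs$(R,ts)$: if $R$ is locked return NULL; otherwise return the version of $R$ with the highest timestamp $\le ts$, or NULL if none is available. LockAtTs$(R,ts)$: if $R$ is locked or $R$ has timestamp $\ge ts$ return NULL; otherwise lock $R$. A transaction with read set RSet and write set WSet executes ExecuteAndCommit(RSet, WSet): $rts \gets$ GET\_TS; for each $R\in$ RSet, if ReadAtTs$(R,rts)$ returns NULL then abort; if WSet is empty, commit (read-only transaction); otherwise for each $W\in$ WSet, if LockAtTs$(W,rts)$ returns NULL then abort; then $wts \gets$ GET\_TS (performed while holding the locks); then for each $R \in$ RSet $\setminus$ WSet, if $R$ is locked or $R$ has timestamp $> rts$, abort (validation failure); then install for each object in WSet a new version with timestamp $wts$, unlock all objects, and commit. Here $rts$ is the transaction's read timestamp and $wts$ its write timestamp; a version of an object written by a committed transaction carries that transaction's $wts$. *)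

theory Defs
  imports Main Complex_Main
begin

(* Global time is a real number ("now"); every atomic step happens at the
   current global time, and a Tick step lets global time advance.  The local clock of machine m is clk m : global time -> local time.
   TIME() returns any interval [L,U] containing the current global time.
   GET_TS = TIME() followed by a local sleep of (U-L)(1+eps); it returns U. *)

datatype phase =
    NotStarted
  | SleepR real real            (* rts = U, local wake-up deadline *)
  | Reading real                (* rts *)
  | Locking real                (* rts *)
  | SleepW real real real       (* rts, wts = U, local wake-up deadline *)
  | Validating real real        (* rts, wts *)
  | Committed
  | Aborted

record ('t, 'o) st =
  now    :: real
  owner  :: "'o \<Rightarrow> 't option"         (* lock bit (with lock holder) *)
  vers   :: "'o \<Rightarrow> real set"          (* timestamps of the versions of each object *)
  ph     :: "'t \<Rightarrow> phase"
  rts_of :: "'t \<Rightarrow> real option"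
  rd     :: "'t \<Rightarrow> 'o \<Rightarrow> real option"  (* version of R read by T (ReadAtTs result) *)

definition release :: "'t \<Rightarrow> ('o \<Rightarrow> 't option) \<Rightarrow> ('o \<Rightarrow> 't option)" where
  "release T own = (\<lambda>x. if own x = Some T then None else own x)"

definition init_st :: "('t, 'o) st \<Rightarrow> bool" where
  "init_st s \<longleftrightarrow> (\<forall>x. owner s x = None) \<and> (\<forall>x. finite (vers s x))
     \<and> (\<forall>T. ph s T = NotStarted) \<and> (\<forall>T. rts_of s T = None) \<and> (\<forall>T x. rd s T x = None)"

inductive step ::
  "real \<Rightarrow> ('m \<Rightarrow> real \<Rightarrow> real) \<Rightarrow> ('t \<Rightarrow> 'm) \<Rightarrow> ('t \<Rightarrow> 'o set) \<Rightarrow> ('t \<Rightarrow> 'o set)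
     \<Rightarrow> ('t, 'o) st \<Rightarrow> ('t, 'o) st \<Rightarrow> bool"
  for eps clk mach RS WS where
  tick: "t \<ge> now s \<Longrightarrow> step eps clk mach RS WS s (s\<lparr>now := t\<rparr>)"
| start: "\<lbrakk>ph s T = NotStarted; L \<le> now s; now s \<le> U\<rbrakk> \<Longrightarrow>
    step eps clk mach RS WS s
      (s\<lparr>ph := (ph s)(T := SleepR U (clk (mach T) (now s) + (U - L) * (1 + eps))),
         rts_of := (rts_of s)(T := Some U)\<rparr>)"
| wakeR: "\<lbrakk>ph s T = SleepR rts dl; clk (mach T) (now s) \<ge> dl\<rbrakk> \<Longrightarrow>
    step eps clk mach RS WS s (s\<lparr>ph := (ph s)(T := Reading rts)\<rparr>)"
| read_ok: "\<lbrakk>ph s T = Reading rts; R \<in> RS T; rd s T R = None; owner s R = None;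
      v \<in> vers s R; v \<le> rts; \<forall>w\<in>vers s R. w \<le> rts \<longrightarrow> w \<le> v\<rbrakk> \<Longrightarrow>
    step eps clk mach RS WS s (s\<lparr>rd := (rd s)(T := (rd s T)(R := Some v))\<rparr>)"
| read_fail: "\<lbrakk>ph s T = Reading rts; R \<in> RS T; rd s T R = None;
      owner s R \<noteq> None \<or> \<not> (\<exists>v\<in>vers s R. v \<le> rts)\<rbrakk> \<Longrightarrow>
    step eps clk mach RS WS s (s\<lparr>ph := (ph s)(T := Aborted)\<rparr>)"
| commit_ro: "\<lbrakk>ph s T = Reading rts; \<forall>R\<in>RS T. rd s T R \<noteq> None; WS T = {}\<rbrakk> \<Longrightarrow>
    step eps clk mach RS WS s (s\<lparr>ph := (ph s)(T := Committed)\<rparr>)"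
| to_lock: "\<lbrakk>ph s T = Reading rts; \<forall>R\<in>RS T. rd s T R \<noteq> None; WS T \<noteq> {}\<rbrakk> \<Longrightarrow>
    step eps clk mach RS WS s (s\<lparr>ph := (ph s)(T := Locking rts)\<rparr>)"
| lock_ok: "\<lbrakk>ph s T = Locking rts; W \<in> WS T; owner s W = None; \<forall>v\<in>vers s W. v < rts\<rbrakk> \<Longrightarrow>
    step eps clk mach RS WS s (s\<lparr>owner := (owner s)(W := Some T)\<rparr>)"
| lock_fail: "\<lbrakk>ph s T = Locking rts; W \<in> WS T; owner s W \<noteq> Some T;
      owner s W \<noteq> None \<or> (\<exists>v\<in>vers s W. v \<ge> rts)\<rbrakk> \<Longrightarrow>
    step eps clk mach RS WS s (s\<lparr>ph := (ph s)(T := Aborted), owner := release T (owner s)\<rparr>)"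
| startW: "\<lbrakk>ph s T = Locking rts; \<forall>W\<in>WS T. owner s W = Some T; L \<le> now s; now s \<le> U\<rbrakk> \<Longrightarrow>
    step eps clk mach RS WS s
      (s\<lparr>ph := (ph s)(T := SleepW rts U (clk (mach T) (now s) + (U - L) * (1 + eps)))\<rparr>)"
| wakeW: "\<lbrakk>ph s T = SleepW rts wts dl; clk (mach T) (now s) \<ge> dl\<rbrakk> \<Longrightarrow>
    step eps clk mach RS WS s (s\<lparr>ph := (ph s)(T := Validating rts wts)\<rparr>)"
| val_fail: "\<lbrakk>ph s T = Validating rts wts; R \<in> RS T - WS T;
      owner s R \<noteq> None \<or> (\<exists>v\<in>vers s R. v > rts)\<rbrakk> \<Longrightarrow>
    step eps clk mach RS WS s (s\<lparr>ph := (ph s)(T := Aborted), owner := release T (owner s)\<rparr>)"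
| commit: "\<lbrakk>ph s T = Validating rts wts;
      \<forall>R\<in>RS T - WS T. owner s R = None \<and> (\<forall>v\<in>vers s R. v \<le> rts)\<rbrakk> \<Longrightarrow>
    step eps clk mach RS WS s
      (s\<lparr>ph := (ph s)(T := Committed), owner := release T (owner s),
         vers := (\<lambda>x. if x \<in> WS T then insert wts (vers s x) else vers s x)\<rparr>)"

definition reachable ::
  "real \<Rightarrow> ('m \<Rightarrow> real \<Rightarrow> real) \<Rightarrow> ('t \<Rightarrow> 'm) \<Rightarrow> ('t \<Rightarrow> 'o set) \<Rightarrow> ('t \<Rightarrow> 'o set)
     \<Rightarrow> ('t, 'o) st \<Rightarrow> bool" where
  "reachable eps clk mach RS WS s \<longleftrightarrow>
     (\<exists>s0. init_st s0 \<and> (step eps clk mach RS WS)\<^sup>*\<^sup>* s0 s)"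

end

theory Submission
  imports Defs
begin

definition I1 :: "('t, 'o) st \<Rightarrow> bool" where
 "I1 s \<longleftrightarrow> (\<forall>T. ph s T = NotStarted \<longrightarrow> rts_of s T = None \<and> (\<forall>x. rd s T x = None))"
definition I2 :: "('m \<Rightarrow> real \<Rightarrow> real) \<Rightarrow> ('t \<Rightarrow> 'm) \<Rightarrow> ('t, 'o) st \<Rightarrow> bool" where
 "I2 clk mach s \<longleftrightarrow> (\<forall>T r dl. ph s T = SleepR r dl \<longrightarrow> rts_of s T = Some r \<and> (\<forall>x. rd s T x = None) \<and>
     (\<forall>t. now s \<le> t \<longrightarrow> dl \<le> clk (mach T) t \<longrightarrow> r \<le> t))"
definition I3 :: "('t, 'o) st \<Rightarrow> bool" where
 "I3 s \<longleftrightarrow> (\<forall>T r. ph s T = Reading r \<longrightarrow> rts_of s T = Some r \<and> r \<le> now s)"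
definition I4 :: "('t, 'o) st \<Rightarrow> bool" where
 "I4 s \<longleftrightarrow> (\<forall>T x v. rd s T x = Some v \<longrightarrow> (\<exists>r. rts_of s T = Some r \<and> r \<le> now s \<and> (\<forall>w\<in>vers s x. v < w \<longrightarrow> r \<le> w)))"
definition I5 :: "('t \<Rightarrow> 'o set) \<Rightarrow> ('t, 'o) st \<Rightarrow> bool" where
 "I5 WS s \<longleftrightarrow> (\<forall>W r wts dl. ph s W = SleepW r wts dl \<longrightarrow> (\<forall>x\<in>WS W. owner s x = Some W))"
definition I6 :: "('t \<Rightarrow> 'o set) \<Rightarrow> ('t, 'o) st \<Rightarrow> bool" where
 "I6 WS s \<longleftrightarrow> (\<forall>W r wts. ph s W = Validating r wts \<longrightarrow> (\<forall>x\<in>WS W. owner s x = Some W))"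
definition I7 :: "('t, 'o) st \<Rightarrow> bool" where
 "I7 s \<longleftrightarrow> (\<forall>W x T v r wts. owner s x = Some W \<longrightarrow> rd s T x = Some v \<longrightarrow> rts_of s T = Some r \<longrightarrow>
     (\<forall>r' dl. ph s W = SleepW r' wts dl \<longrightarrow> r \<le> wts) \<and> (\<forall>r'. ph s W = Validating r' wts \<longrightarrow> r \<le> wts))"

definition inv where
 "inv clk mach WS s \<longleftrightarrow> I1 s \<and> I2 clk mach s \<and> I3 s \<and> I4 s \<and> I5 WS s \<and> I6 WS s \<and> I7 s"

lemma inv_init: "init_st s \<Longrightarrow> inv clk mach WS s"
  unfolding inv_def init_st_def I1_def I2_def I3_def I4_def I5_def I6_def I7_def by auto

lemma tick_pres:
  assumes "t \<ge> now s" "inv clk mach WS s"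
  shows "inv clk mach WS (s\<lparr>now := t\<rparr>)"
proof -
  from assms(2) have a: "I1 s" "I2 clk mach s" "I3 s" "I4 s" "I5 WS s" "I6 WS s" "I7 s"
    unfolding inv_def by auto
  have "I2 clk mach (s\<lparr>now := t\<rparr>)" unfolding I2_def
  proof (intro allI impI conjI)
    fix T r dl assume h: "ph (s\<lparr>now := t\<rparr>) T = SleepR r dl"
    then show "rts_of (s\<lparr>now := t\<rparr>) T = Some r" "\<And>x. rd (s\<lparr>now := t\<rparr>) T x = None"
      using a(2) unfolding I2_def by auto
    fix t' assume "now (s\<lparr>now := t\<rparr>) \<le> t'" "dl \<le> clk (mach T) t'"
    then show "r \<le> t'" using h a(2) assms(1) unfolding I2_def by auto
  qed
  moreover have "I3 (s\<lparr>now := t\<rparr>)" using a(3) assms(1) unfolding I3_def by force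
  moreover have "I4 (s\<lparr>now := t\<rparr>)" using a(4) assms(1) unfolding I4_def by force
  ultimately show ?thesis using a unfolding inv_def I1_def I5_def I6_def I7_def by simp
qed

lemma start_pres:
  assumes eps: "0 \<le> eps"
    and drift: "\<forall>m t1 t2. t1 \<le> t2 \<longrightarrow>
           (1 - eps) * (t2 - t1) \<le> clk m t2 - clk m t1 \<and> clk m t2 - clk m t1 \<le> (1 + eps) * (t2 - t1)"
    and h: "ph s T = NotStarted" "L \<le> now s" "now s \<le> U" and I: "inv clk mach WS s"
  shows "inv clk mach WS (s\<lparr>ph := (ph s)(T := SleepR U (clk (mach T) (now s) + (U - L) * (1 + eps))),
         rts_of := (rts_of s)(T := Some U)\<rparr>)" (is "inv _ _ _ ?s'")
proof -
  from I have a: "I1 s" "I2 clk mach s" "I3 s" "I4 s" "I5 WS s" "I6 WS s" "I7 s"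
    unfolding inv_def by auto
  have sl: "U \<le> t" if "now s \<le> t" "clk (mach T) (now s) + (U - L) * (1 + eps) \<le> clk (mach T) t" for t
  proof -
    have "clk (mach T) t - clk (mach T) (now s) \<le> (1 + eps) * (t - now s)"
      using drift that(1) by blast
    with that(2) have "(U - L) * (1 + eps) \<le> (t - now s) * (1 + eps)" by (simp add: algebra_simps)
    hence "U - L \<le> t - now s" using eps by (simp add: mult_le_cancel_right)
    thus ?thesis using h by linarith
  qed
  have rdT: "rd s T x = None" for x using a(1) h(1) unfolding I1_def by auto
  have "I1 ?s'" using a(1) unfolding I1_def by auto
  moreover have "I2 clk mach ?s'" using a(2) sl rdT unfolding I2_def by auto
  moreover have "I3 ?s'" using a(3) unfolding I3_def by auto
  moreover have "I4 ?s'" using a(4) rdT unfolding I4_def by (auto split: if_splits)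
  moreover have "I5 WS ?s'" using a(5) unfolding I5_def by auto
  moreover have "I6 WS ?s'" using a(6) unfolding I6_def by auto
  moreover have "I7 ?s'" using a(7) rdT unfolding I7_def by (auto split: if_splits)
  ultimately show ?thesis unfolding inv_def by simp
qed

lemma wakeR_pres:
  assumes h: "ph s T = SleepR rts dl" "clk (mach T) (now s) \<ge> dl" and I: "inv clk mach WS s"
  shows "inv clk mach WS (s\<lparr>ph := (ph s)(T := Reading rts)\<rparr>)" (is "inv _ _ _ ?s'")
proof -
  from I have a: "I1 s" "I2 clk mach s" "I3 s" "I4 s" "I5 WS s" "I6 WS s" "I7 s"
    unfolding inv_def by auto
  have "I1 ?s'" using a h unfolding I1_def by (auto simp: release_def)
  moreover have "I2 clk mach ?s'" using a h unfolding I2_def by (auto simp: release_def)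
  moreover have "I3 ?s'" using a h unfolding I3_def I2_def by (auto simp: release_def)
  moreover have "I4 ?s'" using a h unfolding I4_def by (auto simp: release_def)
  moreover have "I5 WS ?s'" using a h unfolding I5_def by (auto simp: release_def)
  moreover have "I6 WS ?s'" using a h unfolding I6_def by (auto simp: release_def)
  moreover have "I7 ?s'" using a h unfolding I7_def by (auto simp: release_def)
  ultimately show ?thesis unfolding inv_def by simp
qed

lemma read_ok_pres:
  assumes h: "ph s T = Reading rts" "R \<in> RS T" "rd s T R = None" "owner s R = None" "v \<in> vers s R" "v \<le> rts" "\<forall>w\<in>vers s R. w \<le> rts \<longrightarrow> w \<le> v" and I: "inv clk mach WS s"
  shows "inv clk mach WS (s\<lparr>rd := (rd s)(T := (rd s T)(R := Some v))\<rparr>)" (is "inv _ _ _ ?s'")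
proof -
  from I have a: "I1 s" "I2 clk mach s" "I3 s" "I4 s" "I5 WS s" "I6 WS s" "I7 s"
    unfolding inv_def by auto
  have "I1 ?s'" using a h unfolding I1_def by (auto simp: release_def)
  moreover have "I2 clk mach ?s'" using a h unfolding I2_def by (auto simp: release_def)
  moreover have "I3 ?s'" using a h unfolding I3_def by (auto simp: release_def)
  moreover have "I4 ?s'" using a h unfolding I4_def I3_def by (auto simp: release_def; force)
  moreover have "I5 WS ?s'" using a h unfolding I5_def by (auto simp: release_def)
  moreover have "I6 WS ?s'" using a h unfolding I6_def by (auto simp: release_def)
  moreover have "I7 ?s'" using a h unfolding I7_def by (auto simp: release_def)
  ultimately show ?thesis unfolding inv_def by simp
qed

lemma read_fail_pres:
  assumes h: "ph s T = Reading rts" and I: "inv clk mach WS s"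
  shows "inv clk mach WS (s\<lparr>ph := (ph s)(T := Aborted)\<rparr>)" (is "inv _ _ _ ?s'")
proof -
  from I have a: "I1 s" "I2 clk mach s" "I3 s" "I4 s" "I5 WS s" "I6 WS s" "I7 s"
    unfolding inv_def by auto
  have "I1 ?s'" using a h unfolding I1_def by (auto simp: release_def)
  moreover have "I2 clk mach ?s'" using a h unfolding I2_def by (auto simp: release_def)
  moreover have "I3 ?s'" using a h unfolding I3_def by (auto simp: release_def)
  moreover have "I4 ?s'" using a h unfolding I4_def by (auto simp: release_def)
  moreover have "I5 WS ?s'" using a h unfolding I5_def by (auto simp: release_def)
  moreover have "I6 WS ?s'" using a h unfolding I6_def by (auto simp: release_def)
  moreover have "I7 ?s'" using a h unfolding I7_def by (auto simp: release_def)
  ultimately show ?thesis unfolding inv_def by simp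
qed

lemma commit_ro_pres:
  assumes h: "ph s T = Reading rts" and I: "inv clk mach WS s"
  shows "inv clk mach WS (s\<lparr>ph := (ph s)(T := Committed)\<rparr>)" (is "inv _ _ _ ?s'")
proof -
  from I have a: "I1 s" "I2 clk mach s" "I3 s" "I4 s" "I5 WS s" "I6 WS s" "I7 s"
    unfolding inv_def by auto
  have "I1 ?s'" using a h unfolding I1_def by (auto simp: release_def)
  moreover have "I2 clk mach ?s'" using a h unfolding I2_def by (auto simp: release_def)
  moreover have "I3 ?s'" using a h unfolding I3_def by (auto simp: release_def)
  moreover have "I4 ?s'" using a h unfolding I4_def by (auto simp: release_def)
  moreover have "I5 WS ?s'" using a h unfolding I5_def by (auto simp: release_def)
  moreover have "I6 WS ?s'" using a h unfolding I6_def by (auto simp: release_def)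
  moreover have "I7 ?s'" using a h unfolding I7_def by (auto simp: release_def)
  ultimately show ?thesis unfolding inv_def by simp
qed

lemma to_lock_pres:
  assumes h: "ph s T = Reading rts" and I: "inv clk mach WS s"
  shows "inv clk mach WS (s\<lparr>ph := (ph s)(T := Locking rts)\<rparr>)" (is "inv _ _ _ ?s'")
proof -
  from I have a: "I1 s" "I2 clk mach s" "I3 s" "I4 s" "I5 WS s" "I6 WS s" "I7 s"
    unfolding inv_def by auto
  have "I1 ?s'" using a h unfolding I1_def by (auto simp: release_def)
  moreover have "I2 clk mach ?s'" using a h unfolding I2_def by (auto simp: release_def)
  moreover have "I3 ?s'" using a h unfolding I3_def by (auto simp: release_def)
  moreover have "I4 ?s'" using a h unfolding I4_def by (auto simp: release_def)
  moreover have "I5 WS ?s'" using a h unfolding I5_def by (auto simp: release_def)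
  moreover have "I6 WS ?s'" using a h unfolding I6_def by (auto simp: release_def)
  moreover have "I7 ?s'" using a h unfolding I7_def by (auto simp: release_def)
  ultimately show ?thesis unfolding inv_def by simp
qed

lemma lock_ok_pres:
  assumes h: "ph s T = Locking rts" "owner s W = None" and I: "inv clk mach WS s"
  shows "inv clk mach WS (s\<lparr>owner := (owner s)(W := Some T)\<rparr>)" (is "inv _ _ _ ?s'")
proof -
  from I have a: "I1 s" "I2 clk mach s" "I3 s" "I4 s" "I5 WS s" "I6 WS s" "I7 s"
    unfolding inv_def by auto
  have "I1 ?s'" using a h unfolding I1_def by (auto simp: release_def)
  moreover have "I2 clk mach ?s'" using a h unfolding I2_def by (auto simp: release_def)
  moreover have "I3 ?s'" using a h unfolding I3_def by (auto simp: release_def)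
  moreover have "I4 ?s'" using a h unfolding I4_def by (auto simp: release_def)
  moreover have "I5 WS ?s'" using a h unfolding I5_def by (auto simp: release_def; metis option.distinct(1))
  moreover have "I6 WS ?s'" using a h unfolding I6_def by (auto simp: release_def; metis option.distinct(1))
  moreover have "I7 ?s'" using a h unfolding I7_def by (auto simp: release_def)
  ultimately show ?thesis unfolding inv_def by simp
qed

lemma lock_fail_pres:
  assumes h: "ph s T = Locking rts" and I: "inv clk mach WS s"
  shows "inv clk mach WS (s\<lparr>ph := (ph s)(T := Aborted), owner := release T (owner s)\<rparr>)" (is "inv _ _ _ ?s'")
proof -
  from I have a: "I1 s" "I2 clk mach s" "I3 s" "I4 s" "I5 WS s" "I6 WS s" "I7 s"
    unfolding inv_def by auto
  have "I1 ?s'" using a h unfolding I1_def by (auto simp: release_def)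
  moreover have "I2 clk mach ?s'" using a h unfolding I2_def by (auto simp: release_def)
  moreover have "I3 ?s'" using a h unfolding I3_def by (auto simp: release_def)
  moreover have "I4 ?s'" using a h unfolding I4_def by (auto simp: release_def)
  moreover have "I5 WS ?s'" using a h unfolding I5_def by (auto simp: release_def)
  moreover have "I6 WS ?s'" using a h unfolding I6_def by (auto simp: release_def)
  moreover have "I7 ?s'" using a h unfolding I7_def by (auto simp: release_def)
  ultimately show ?thesis unfolding inv_def by simp
qed

lemma startW_pres:
  assumes h: "ph s T = Locking rts" "\<forall>W\<in>WS T. owner s W = Some T" "L \<le> now s" "now s \<le> U" and I: "inv clk mach WS s"
  shows "inv clk mach WS (s\<lparr>ph := (ph s)(T := SleepW rts U dl)\<rparr>)" (is "inv _ _ _ ?s'")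
proof -
  from I have a: "I1 s" "I2 clk mach s" "I3 s" "I4 s" "I5 WS s" "I6 WS s" "I7 s"
    unfolding inv_def by auto
  have rn: "\<And>T' x v r. rd s T' x = Some v \<Longrightarrow> rts_of s T' = Some r \<Longrightarrow> r \<le> now s" using a(4) unfolding I4_def by force
  have "I1 ?s'" using a h unfolding I1_def by (auto simp: release_def)
  moreover have "I2 clk mach ?s'" using a h unfolding I2_def by (auto simp: release_def)
  moreover have "I3 ?s'" using a h unfolding I3_def by (auto simp: release_def)
  moreover have "I4 ?s'" using a h unfolding I4_def by (auto simp: release_def)
  moreover have "I5 WS ?s'" using a h unfolding I5_def by (auto simp: release_def)
  moreover have "I6 WS ?s'" using a h unfolding I6_def by (auto simp: release_def)
  moreover have "I7 ?s'" using a h unfolding I7_def by (auto; meson rn order_trans)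
  ultimately show ?thesis unfolding inv_def by simp
qed

lemma wakeW_pres:
  assumes h: "ph s T = SleepW rts wts dl" and I: "inv clk mach WS s"
  shows "inv clk mach WS (s\<lparr>ph := (ph s)(T := Validating rts wts)\<rparr>)" (is "inv _ _ _ ?s'")
proof -
  from I have a: "I1 s" "I2 clk mach s" "I3 s" "I4 s" "I5 WS s" "I6 WS s" "I7 s"
    unfolding inv_def by auto
  have "I1 ?s'" using a h unfolding I1_def by (auto simp: release_def)
  moreover have "I2 clk mach ?s'" using a h unfolding I2_def by (auto simp: release_def)
  moreover have "I3 ?s'" using a h unfolding I3_def by (auto simp: release_def)
  moreover have "I4 ?s'" using a h unfolding I4_def by (auto simp: release_def)
  moreover have "I5 WS ?s'" using a h unfolding I5_def by (auto simp: release_def)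
  moreover have "I6 WS ?s'" using a h unfolding I6_def I5_def by (auto simp: release_def)
  moreover have "I7 ?s'" using a h unfolding I7_def by (auto simp: release_def)
  ultimately show ?thesis unfolding inv_def by simp
qed

lemma val_fail_pres:
  assumes h: "ph s T = Validating rts wts" and I: "inv clk mach WS s"
  shows "inv clk mach WS (s\<lparr>ph := (ph s)(T := Aborted), owner := release T (owner s)\<rparr>)" (is "inv _ _ _ ?s'")
proof -
  from I have a: "I1 s" "I2 clk mach s" "I3 s" "I4 s" "I5 WS s" "I6 WS s" "I7 s"
    unfolding inv_def by auto
  have "I1 ?s'" using a h unfolding I1_def by (auto simp: release_def)
  moreover have "I2 clk mach ?s'" using a h unfolding I2_def by (auto simp: release_def)
  moreover have "I3 ?s'" using a h unfolding I3_def by (auto simp: release_def)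
  moreover have "I4 ?s'" using a h unfolding I4_def by (auto simp: release_def)
  moreover have "I5 WS ?s'" using a h unfolding I5_def by (auto simp: release_def)
  moreover have "I6 WS ?s'" using a h unfolding I6_def by (auto simp: release_def)
  moreover have "I7 ?s'" using a h unfolding I7_def by (auto simp: release_def)
  ultimately show ?thesis unfolding inv_def by simp
qed

lemma commit_pres:
  assumes h: "ph s T = Validating rts wts" and I: "inv clk mach WS s"
  shows "inv clk mach WS (s\<lparr>ph := (ph s)(T := Committed), owner := release T (owner s),
         vers := (\<lambda>x. if x \<in> WS T then insert wts (vers s x) else vers s x)\<rparr>)" (is "inv _ _ _ ?s'")
proof -
  from I have a: "I1 s" "I2 clk mach s" "I3 s" "I4 s" "I5 WS s" "I6 WS s" "I7 s"
    unfolding inv_def by auto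
  have "I1 ?s'" using a h unfolding I1_def by (auto simp: release_def)
  moreover have "I2 clk mach ?s'" using a h unfolding I2_def by (auto simp: release_def)
  moreover have "I3 ?s'" using a h unfolding I3_def by (auto simp: release_def)
  moreover have "I4 ?s'" unfolding I4_def
  proof (intro allI impI)
    fix T' x v assume rdv: "rd ?s' T' x = Some v"
    hence rdv0: "rd s T' x = Some v" by simp
    from a(4) rdv0 obtain r where r: "rts_of s T' = Some r" "r \<le> now s" "\<forall>w\<in>vers s x. v < w \<longrightarrow> r \<le> w"
      unfolding I4_def by blast
    have "r \<le> wts" if "x \<in> WS T"
    proof -
      from a(6) h that have "owner s x = Some T" unfolding I6_def by blast
      with a(7) rdv0 r(1) h show "r \<le> wts" unfolding I7_def by blast
    qed
    thus "\<exists>r. rts_of ?s' T' = Some r \<and> r \<le> now ?s' \<and> (\<forall>w\<in>vers ?s' x. v < w \<longrightarrow> r \<le> w)"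
      using r by auto
  qed
  moreover have "I5 WS ?s'" using a h unfolding I5_def by (auto simp: release_def)
  moreover have "I6 WS ?s'" using a h unfolding I6_def by (auto simp: release_def)
  moreover have "I7 ?s'" using a h unfolding I7_def by (auto simp: release_def)
  ultimately show ?thesis unfolding inv_def by simp
qed

lemma inv_step:
  assumes eps: "0 \<le> eps"
    and drift: "\<forall>m t1 t2. t1 \<le> t2 \<longrightarrow>
           (1 - eps) * (t2 - t1) \<le> clk m t2 - clk m t1 \<and> clk m t2 - clk m t1 \<le> (1 + eps) * (t2 - t1)"
    and st: "step eps clk mach RS WS s s'" and I: "inv clk mach WS s"
  shows "inv clk mach WS s'"
  using st I
proof (induction rule: step.induct)
  case (tick t s) then show ?case by (rule tick_pres)
next case (start s T L U) then show ?case by (rule start_pres[OF eps drift])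
next case (wakeR s T rts dl) then show ?case by (rule wakeR_pres)
next case (read_ok s T rts R v) then show ?case by (rule read_ok_pres)
next case (read_fail s T rts R) then show ?case by (intro read_fail_pres)
next case (commit_ro s T rts) then show ?case by (intro commit_ro_pres)
next case (to_lock s T rts) then show ?case by (intro to_lock_pres)
next case (lock_ok s T rts W) then show ?case by (intro lock_ok_pres)
next case (lock_fail s T rts W) then show ?case by (intro lock_fail_pres)
next case (startW s T rts L U) then show ?case by (intro startW_pres)
next case (wakeW s T rts wts dl) then show ?case by (intro wakeW_pres)
next case (val_fail s T rts wts R) then show ?case by (intro val_fail_pres)
next case (commit s T rts wts) then show ?case by (intro commit_pres)
qed

theorem lemma2:
  fixes eps :: real and clk :: "'m \<Rightarrow> real \<Rightarrow> real" and mach :: "'t \<Rightarrow> 'm"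
    and RS WS :: "'t \<Rightarrow> 'o set" and s :: "('t, 'o) st"
  assumes "0 \<le> eps"
    and "\<forall>m t1 t2. t1 \<le> t2 \<longrightarrow>
           (1 - eps) * (t2 - t1) \<le> clk m t2 - clk m t1 \<and> clk m t2 - clk m t1 \<le> (1 + eps) * (t2 - t1)"
    and "\<forall>T. finite (RS T) \<and> finite (WS T)"
    and "reachable eps clk mach RS WS s"
    and "rts_of s T = Some rts" and "R \<in> RS T" and "rd s T R = Some vR" and "vR \<le> rts"
  shows "\<not> (\<exists>w\<in>vers s R. vR < w \<and> w < rts)"
proof -
  obtain s0 where s0: "init_st s0" "(step eps clk mach RS WS)\<^sup>*\<^sup>* s0 s"
    using assms(4) unfolding reachable_def by blast
  have "inv clk mach WS s"
    using s0(2) inv_init[OF s0(1)]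
    by (induction rule: rtranclp_induct) (auto intro: inv_step[OF assms(1,2)])
  hence "I4 s" unfolding inv_def by simp
  thus ?thesis using assms(5,7) unfolding I4_def by fastforce
qed

end
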